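(* Suppose one trial with success probability $p\in(0,1)$ is performed and results in success (i.e. $X=1$ with $X\sim B(1,p)$). Put on $p$ the triangle prior with mode $\alpha\in(0,1)$, $$\pi(p)=\begin{cases}\frac{2}{\alpha}p, & 0<p\le\alpha,\\ \frac{2}{1-\alpha}(1-p), & \alpha<p<1.\end{cases}$$ Then the posterior mean of $p$ is $g(\alpha)=\frac{1+\alpha+\alpha^2}{2(1+\alpha)}$, and the unique $\tau\in(0,1)$ satisfying $\tau=g(\tau)$ (the iterative limit obtained by repeatedly replacing the mode of the prior with the posterior mean) is $\tau=\frac{\sqrt5-1}{2}=1/\phi\approx 0.618$, where $\phi=\frac{1+\sqrt5}{2}$ is the Golden Ratio.
   Context: The posterior mean is the Bayes estimate of $p$ under quadratic loss. *)

theory Defs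
  imports "HOL-Analysis.Analysis"
begin

definition triangle_prior :: "real \<Rightarrow> real \<Rightarrow> real" where
  "triangle_prior \<alpha> p =
     (if 0 < p \<and> p \<le> \<alpha> then (2 / \<alpha>) * p
      else if \<alpha> < p \<and> p < 1 then (2 / (1 - \<alpha>)) * (1 - p)
      else 0)"

definition bern_lik :: "nat \<Rightarrow> real \<Rightarrow> real" where
  "bern_lik x p = p ^ x * (1 - p) ^ (1 - x)"

definition posterior_mean :: "real \<Rightarrow> nat \<Rightarrow> real" where
  "posterior_mean \<alpha> x =
     (LINT p:{0<..<1}|lborel. p * bern_lik x p * triangle_prior \<alpha> p) /
     (LINT p:{0<..<1}|lborel. bern_lik x p * triangle_prior \<alpha> p)"

definition g_post :: "real \<Rightarrow> real" where
  "g_post \<alpha> = (1 + \<alpha> + \<alpha>^2) / (2 * (1 + \<alpha>))"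

definition golden_ratio :: real where
  "golden_ratio = (1 + sqrt 5) / 2"

end

theory Submission
  imports Defs
begin
lemma lint_tp:
  fixes k :: nat and \<alpha> I1 I2 :: real
  assumes a0: "0 < \<alpha>" and a1: "\<alpha> < 1"
    and h1: "((\<lambda>p. p^k * (2/\<alpha>*p)) has_integral I1) {0..\<alpha>}"
    and h2: "((\<lambda>p. p^k * (2/(1-\<alpha>)*(1-p))) has_integral I2) {\<alpha>..1}"
  shows "(LINT p:{0<..<1}|lborel. p^k * triangle_prior \<alpha> p) = I1 + I2"
proof -
  let ?f = "\<lambda>p. p^k * triangle_prior \<alpha> p"
  have e1: "((?f) has_integral I1) {0..\<alpha>}"
    by (rule has_integral_eq[OF _ h1]) (auto simp: triangle_prior_def)
  have e2: "((?f) has_integral I2) {\<alpha>..1}"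
  proof (rule has_integral_eq[OF _ h2])
    fix x assume x: "x \<in> {\<alpha>..1}"
    show "x ^ k * (2 / (1 - \<alpha>) * (1 - x)) = ?f x"
    proof (cases "x = \<alpha>")
      case True
      have "1 - \<alpha> \<noteq> 0" using a1 by simp
      thus ?thesis using True a0 by (simp add: triangle_prior_def field_simps)
    next
      case False thus ?thesis using x a0 a1 by (auto simp: triangle_prior_def)
    qed
  qed
  have "(?f has_integral I1 + I2) {0..1}"
    using has_integral_combine[of 0 \<alpha> 1 ?f I1 I2] e1 e2 a0 a1 by simp
  hence hi: "(?f has_integral I1 + I2) {0<..<1}"
    by (simp add: has_integral_Icc_iff_Ioo)
  have nn: "\<And>x. x \<in> {0<..<1} \<Longrightarrow> 0 \<le> ?f x"
    using a0 a1 by (auto simp: triangle_prior_def)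
  have ii: "?f integrable_on {0<..<1}" using hi by (rule has_integral_integrable)
  have si: "set_integrable lebesgue {0<..<1} ?f"
    using ii absolutely_integrable_on_iff_nonneg[of "{0<..<1}" ?f] nn by simp
  have teq: "triangle_prior \<alpha> = (\<lambda>p. indicator {0<..\<alpha>} p * (2/\<alpha>*p) + indicator {\<alpha><..<1} p * (2/(1-\<alpha>)*(1-p)))"
    by (rule ext) (auto simp: triangle_prior_def indicator_def)
  have tm: "triangle_prior \<alpha> \<in> borel_measurable borel"
    unfolding teq by (intro borel_measurable_add borel_measurable_times borel_measurable_indicator borel_measurable_const borel_measurable_diff measurable_id) auto
  have meas: "(\<lambda>x. indicator {0<..<1} x *\<^sub>R ?f x) \<in> borel_measurable lborel"
    unfolding measurable_lborel2 real_scaleR_def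
    by (intro borel_measurable_times borel_measurable_indicator borel_measurable_power measurable_id tm) auto
  have si2: "set_integrable lborel {0<..<1} ?f"
    using si meas unfolding set_integrable_def
    by (simp add: integrable_completion)
  have "(LINT p:{0<..<1}|lborel. ?f p) = integral {0<..<1} ?f"
    by (rule set_borel_integral_eq_integral(2)[OF si2])
  also have "\<dots> = I1 + I2" using hi by (rule integral_unique)
  finally show ?thesis .
qed
theorem mainTheorem2:
  shows "(\<forall>\<alpha>::real. 0 < \<alpha> \<and> \<alpha> < 1 \<longrightarrow> posterior_mean \<alpha> 1 = g_post \<alpha>)
    \<and> {\<tau>::real. 0 < \<tau> \<and> \<tau> < 1 \<and> \<tau> = g_post \<tau>} = {(sqrt 5 - 1) / 2}
    \<and> (sqrt 5 - 1) / 2 = 1 / golden_ratio"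
proof (intro conjI allI impI)
  fix \<alpha> :: real assume a: "0 < \<alpha> \<and> \<alpha> < 1"
  hence a0: "0 < \<alpha>" and a1: "\<alpha> < 1" by auto
  have n1: "1 - \<alpha> \<noteq> 0" using a1 by simp
  have ftc: "((F' :: real \<Rightarrow> real) has_integral F b - F a) {a..b}"
    if "a \<le> b" "\<And>x. (F has_real_derivative F' x) (at x)" for F F' a b
    using that by (intro fundamental_theorem_of_calculus)
      (auto simp: has_real_derivative_iff_has_vector_derivative[symmetric] intro: has_field_derivative_at_within)
  obtain c where c: "c = 2/(1-\<alpha>)" by blast
  have A: "((\<lambda>p. p^2 * (2/\<alpha>*p)) has_integral (2/\<alpha>*\<alpha>^4/4 - 2/\<alpha>*0^4/4)) {0..\<alpha>}"
    using a0 by (intro ftc[where F="\<lambda>x. 2/\<alpha>*x^4/4"]) (auto intro!: derivative_eq_intros simp: algebra_simps power3_eq_cube power2_eq_square)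
  have B: "((\<lambda>p. p^2 * (2/(1-\<alpha>)*(1-p))) has_integral
      (2/(1-\<alpha>)*(1^3/3-1^4/4) - 2/(1-\<alpha>)*(\<alpha>^3/3-\<alpha>^4/4))) {\<alpha>..1}"
    using a1 n1 unfolding c[symmetric] by (intro ftc[where F="\<lambda>x. c*(x^3/3-x^4/4)"]) (auto intro!: derivative_eq_intros simp: algebra_simps power3_eq_cube power2_eq_square)
  have C: "((\<lambda>p. p^1 * (2/\<alpha>*p)) has_integral (2/\<alpha>*\<alpha>^3/3 - 2/\<alpha>*0^3/3)) {0..\<alpha>}"
    using a0 by (intro ftc[where F="\<lambda>x. 2/\<alpha>*x^3/3"]) (auto intro!: derivative_eq_intros simp: algebra_simps power3_eq_cube power2_eq_square)
  have D: "((\<lambda>p. p^1 * (2/(1-\<alpha>)*(1-p))) has_integral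
      (2/(1-\<alpha>)*(1^2/2-1^3/3) - 2/(1-\<alpha>)*(\<alpha>^2/2-\<alpha>^3/3))) {\<alpha>..1}"
    using a1 n1 unfolding c[symmetric] by (intro ftc[where F="\<lambda>x. c*(x^2/2-x^3/3)"]) (auto intro!: derivative_eq_intros simp: algebra_simps power3_eq_cube power2_eq_square)
  have N: "(LINT p:{0<..<1}|lborel. p * bern_lik 1 p * triangle_prior \<alpha> p)
      = (LINT p:{0<..<1}|lborel. p^2 * triangle_prior \<alpha> p)"
    by (simp add: bern_lik_def power2_eq_square)
  have M: "(LINT p:{0<..<1}|lborel. bern_lik 1 p * triangle_prior \<alpha> p)
      = (LINT p:{0<..<1}|lborel. p^1 * triangle_prior \<alpha> p)"
    by (simp add: bern_lik_def)
  have b1: "2/(1-\<alpha>)*(1^3/3-1^4/4) - 2/(1-\<alpha>)*(\<alpha>^3/3-\<alpha>^4/4) = 2/(1-\<alpha>)*((1-\<alpha>)*((1-\<alpha>)*(1+2*\<alpha>+3*\<alpha>^2)/12))"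
  proof -
    have i: "(1::real)^3/3-1^4/4 - (\<alpha>^3/3-\<alpha>^4/4) = (1-\<alpha>)*((1-\<alpha>)*(1+2*\<alpha>+3*\<alpha>^2)/12)"
      by (simp add: algebra_simps power2_eq_square power3_eq_cube power4_eq_xxxx)
    show ?thesis by (subst right_diff_distrib[symmetric]) (simp only: i)
  qed
  have b2: "2/(1-\<alpha>)*((1-\<alpha>)*((1-\<alpha>)*(1+2*\<alpha>+3*\<alpha>^2)/12)) = (1-\<alpha>)*(1+2*\<alpha>+3*\<alpha>^2)/6"
    using n1 by simp
  have d1: "2/(1-\<alpha>)*(1^2/2-1^3/3) - 2/(1-\<alpha>)*(\<alpha>^2/2-\<alpha>^3/3) = 2/(1-\<alpha>)*((1-\<alpha>)*((1-\<alpha>)*(1+2*\<alpha>)/6))"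
  proof -
    have i: "(1::real)^2/2-1^3/3 - (\<alpha>^2/2-\<alpha>^3/3) = (1-\<alpha>)*((1-\<alpha>)*(1+2*\<alpha>)/6)"
      by (simp add: algebra_simps power2_eq_square power3_eq_cube)
    show ?thesis by (subst right_diff_distrib[symmetric]) (simp only: i)
  qed
  have d2: "2/(1-\<alpha>)*((1-\<alpha>)*((1-\<alpha>)*(1+2*\<alpha>)/6)) = (1-\<alpha>)*(1+2*\<alpha>)/3"
    using n1 by simp
  have num: "(2/\<alpha>*\<alpha>^4/4 - 2/\<alpha>*0^4/4) + (2/(1-\<alpha>)*(1^3/3-1^4/4) - 2/(1-\<alpha>)*(\<alpha>^3/3-\<alpha>^4/4)) = (1+\<alpha>+\<alpha>^2)/6"
    unfolding b1 b2 using a0 by (simp add: field_simps power2_eq_square power3_eq_cube power4_eq_xxxx)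
  have den: "(2/\<alpha>*\<alpha>^3/3 - 2/\<alpha>*0^3/3) + (2/(1-\<alpha>)*(1^2/2-1^3/3) - 2/(1-\<alpha>)*(\<alpha>^2/2-\<alpha>^3/3)) = (1+\<alpha>)/3"
    unfolding d1 d2 using a0 by (simp add: field_simps power2_eq_square power3_eq_cube)
  show "posterior_mean \<alpha> 1 = g_post \<alpha>"
    unfolding posterior_mean_def N M lint_tp[OF a0 a1 A B] lint_tp[OF a0 a1 C D] g_post_def
    unfolding num den using a0 by (simp add: field_simps)
next
  have s5: "sqrt 5 ^ 2 = 5" by simp
  have s5b: "2 < sqrt 5" "sqrt 5 < 3"
    by (rule real_less_rsqrt, simp, rule real_less_lsqrt, simp_all)
  show "{\<tau>::real. 0 < \<tau> \<and> \<tau> < 1 \<and> \<tau> = g_post \<tau>} = {(sqrt 5 - 1) / 2}"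
  proof (rule set_eqI, rule iffI)
    fix t assume "t \<in> {\<tau>::real. 0 < \<tau> \<and> \<tau> < 1 \<and> \<tau> = g_post \<tau>}"
    hence t: "0 < t" "t < 1" "t = g_post t" by auto
    have B: "2*(1+t) \<noteq> 0" using t by simp
    have "t * (2*(1+t)) = (1 + t + t^2) / (2*(1+t)) * (2*(1+t))"
      using t(3) unfolding g_post_def by simp
    hence "t * (2*(1+t)) = 1 + t + t^2" using B by simp
    hence q: "t^2 + t - 1 = 0" by (simp add: algebra_simps power2_eq_square)
    have "(2*t + 1)^2 = sqrt 5 ^ 2" using q by (simp add: algebra_simps power2_eq_square)
    hence "(2*t + 1)^2 = 5" by simp
    hence "sqrt 5 = 2*t+1" using t by (intro real_sqrt_unique) auto
    hence "2*t+1 = sqrt 5" by simp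
    thus "t \<in> {(sqrt 5 - 1) / 2}" by simp
  next
    fix t assume "t \<in> {(sqrt 5 - 1) / 2}"
    hence t: "t = (sqrt 5 - 1)/2" by simp
    have q: "t^2 + t - 1 = 0" unfolding t using s5 by (simp add: algebra_simps power2_eq_square field_simps)
    have "0 < t" "t < 1" using s5b t by auto
    moreover have "t = g_post t" unfolding g_post_def using \<open>0 < t\<close> q
      by (simp add: field_simps) (simp add: algebra_simps power2_eq_square)
    ultimately show "t \<in> {\<tau>::real. 0 < \<tau> \<and> \<tau> < 1 \<and> \<tau> = g_post \<tau>}" by simp
  qed
next
  have s5: "sqrt 5 * sqrt 5 = (5::real)" by simp
  show "(sqrt 5 - 1) / 2 = 1 / golden_ratio"
  proof -
    have p: "1 + sqrt 5 \<noteq> 0" by (metis add_pos_nonneg real_sqrt_ge_zero zero_le_numeral zero_less_one order_less_irrefl)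
    have e: "(sqrt 5 - 1)*(1+sqrt 5) = 2*2" using s5 by (simp add: algebra_simps)
    have "1 / ((1 + sqrt 5) / 2) = 2 / (1 + sqrt 5)" by simp
    also have "\<dots> = (sqrt 5 - 1) / 2" using p e by (subst frac_eq_eq) (auto simp: algebra_simps)
    finally show ?thesis unfolding golden_ratio_def by (rule sym)
  qed
qed

end
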